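(* Let $\mathcal{T}$ be a teacher class over $\mathcal{X},\mathcal{Y},\Phi$ and let $H\subseteq\mathcal{X}\times\mathcal{Y}$ be a non-empty history that is consistent with $\mathcal{T}$. Then \[\min_{\mathcal{A}} M(\mathcal{A},\mathcal{T},H)=\mathrm{DFFdim}(\mathcal{T},H),\] where the minimum is over all deterministic DFF algorithms $\mathcal{A}$.
   Context: Setting. $\mathcal{X}$ is a set of examples, $\mathcal{Y}$ a finite set of labels, and $\Phi$ a set of Boolean features $\phi:\mathcal{X}\to\{0,1\}$; $\bot$ denotes a null symbol not in $\mathcal{X}\cup\mathcal{Y}\cup\Phi$. A teacher over $\mathcal{X},\mathcal{Y},\Phi$ is a pair $T=(\ell,\psi)$ with $\ell:\mathcal{X}\to\mathcal{Y}$ and $\psi:\mathcal{X}\times\mathcal{X}\to\Phi\cup\{\bot\}$ such that whenever $\ell(x)\neq\ell(\hat x)$, $\phi:=\psi(x,\hat x)\in\Phi$, $\phi(x)=1$ and $\phi(\hat x)=0$. A teacher class is a set of teachers. A history is a non-empty set $H\subseteq\mathcal{X}\times\mathcal{Y}$; a teacher $(\ell,\psi)$ is consistent with $H$ if $\ell(x)=y$ for all $(x,y)\in H$; $\mathcal{T}_H$ is the set of teachers in $\mathcal{T}$ consistent with $H$, and $\mathcal{T}$ is consistent with $H$ if $\mathcal{T}_H\neq\emptyset$. DFF protocol. A DFF algorithm is given $H$ in advance. In each round $t=1,2,\dots$: an example $x_t\in\mathcal{X}$ arrives; the algorithm outputs a predicted label $\hat y_t$ and an explanation $\hat x_t$,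 where $(\hat x_t,\hat y_t)$ must belong to $H\cup\{(x_s,y_s):s<t\}$; if $\hat y_t=y_t$ (the true label of $x_t$) the algorithm learns only that it was correct; otherwise (a mistake) it receives $y_t$ and a feature $\phi_t\in\Phi$. The feedback of round $t$ is consistent with a teacher $(\ell,\psi)$ if $y_t=\ell(x_t)$ and, when $\hat y_t\neq y_t$, $\phi_t=\psi(x_t,\hat x_t)$. $M(\mathcal{A},\mathcal{T},H)$ denotes the supremum, over all finite example sequences and all teachers $T\in\mathcal{T}_H$, of the number of mistakes of $\mathcal{A}$ when all feedback is consistent with $T$. DFF dimension. A DFF tree is a rooted tree whose nodes are triples $\langle y,\phi,x\rangle$ with $y\in\mathcal{Y}\cup\{\bot\}$, $\phi\in\Phi\cup\{\bot\}$, $x\in\mathcal{X}\cup\{\bot\}$, such that the root has $y=\phi=\bot$, a node has $x=\bot$ iff it is a leaf, every edge is labeled by a pair $(\hat x,\hat y)\in\mathcal{X}\times\mathcal{Y}$, and every non-root node $\langle y,\phi,x\rangle$ with incoming edge $(\hat x,\hat y)$ has $\phi\neq\bot$ whenever $y\neq\hat y$. For a parent–child pair $\langle\cdot,\cdot,x\rangle\xrightarrow{(\hat x,\hat y)}\langle y,\phi,\cdot\rangle$ on a path, $(x,y)$ is called a labeled example in that path. A path from the root is consistent with a teacher $(\ell,\psi)$ if for every such parent–child pair on it, $\ell(x)=y$ and, if $y\neq\hat y$, $\psi(x,\hat x)=\phi$. Given $\mathcal{T}$ consistent with $H$, a DFF tree is shattered by $\mathcal{T}$ and $H$ if: (1)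 every non-root node $\langle y,\phi,x\rangle$ with incoming edge $(\hat x,\hat y)$ has $y\neq\hat y$; (2) the labels of the outgoing edges of each non-leaf node $v$ are exactly the pairs that belong to $H$ or are labeled examples in the path from the root to $v$; (3) every root-to-leaf path is consistent with some teacher in $\mathcal{T}_H$; (4) all root-to-leaf paths have the same number of edges, called the height. $\mathrm{DFFdim}(\mathcal{T},H)$ is the maximal height of a DFF tree shattered by $\mathcal{T}$ and $H$. *)

theory Defs
  imports Main "HOL-Library.Extended_Nat"
begin

text \<open>Examples are elements of type 'x, labels elements of the finite type 'y,
  features are Boolean functions on examples ('x => bool), the feature set is Phi.
  The null symbol is modelled by None.\<close>

type_synonym ('x, 'y) teacher = "('x \<Rightarrow> 'y) \<times> ('x \<Rightarrow> 'x \<Rightarrow> ('x \<Rightarrow> bool) option)"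

definition is_teacher :: "('x \<Rightarrow> bool) set \<Rightarrow> ('x, 'y) teacher \<Rightarrow> bool" where
  "is_teacher Phi T \<longleftrightarrow>
     (\<forall>x xh. set_option (snd T x xh) \<subseteq> Phi) \<and>
     (\<forall>x xh. fst T x \<noteq> fst T xh \<longrightarrow>
        (\<exists>\<phi>\<in>Phi. snd T x xh = Some \<phi> \<and> \<phi> x \<and> \<not> \<phi> xh))"

definition teacher_class :: "('x \<Rightarrow> bool) set \<Rightarrow> ('x, 'y) teacher set \<Rightarrow> bool" where
  "teacher_class Phi TT \<longleftrightarrow> (\<forall>T\<in>TT. is_teacher Phi T)"

definition consistent_hist :: "('x \<times> 'y) set \<Rightarrow> ('x, 'y) teacher \<Rightarrow> bool" where
  "consistent_hist H T \<longleftrightarrow> (\<forall>(x, y)\<in>H. fst T x = y)"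

definition teachers_H :: "('x, 'y) teacher set \<Rightarrow> ('x \<times> 'y) set \<Rightarrow> ('x, 'y) teacher set" where
  "teachers_H TT H = {T \<in> TT. consistent_hist H T}"

text \<open>One round of an interaction: the example x_t, the explanation, the predicted label,
  and the feedback: None = "correct", Some (y, phi) = mistake with true label y and feature phi.\<close>

datatype ('x, 'y) round =
  Round (r_ex: 'x) (r_expl: 'x) (r_pred: 'y) (r_fb: "('y \<times> ('x \<Rightarrow> bool)) option")

definition r_label :: "('x, 'y) round \<Rightarrow> 'y" where
  "r_label r = (case r_fb r of None \<Rightarrow> r_pred r | Some (y, _) \<Rightarrow> y)"

text \<open>A deterministic DFF algorithm (for the history H given in advance) maps the transcript
  of the previous rounds and the current example to an (explanation, predicted label) pair.\<close>
type_synonym ('x, 'y) dff_algorithm = "('x, 'y) round list \<Rightarrow> 'x \<Rightarrow> 'x \<times> 'y"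

definition is_run :: "('x, 'y) dff_algorithm \<Rightarrow> ('x, 'y) round list \<Rightarrow> bool" where
  "is_run A rs \<longleftrightarrow>
     (\<forall>i < length rs. A (take i rs) (r_ex (rs ! i)) = (r_expl (rs ! i), r_pred (rs ! i)))"

definition allowed_pairs :: "('x \<times> 'y) set \<Rightarrow> ('x, 'y) round list \<Rightarrow> ('x \<times> 'y) set" where
  "allowed_pairs H rs = H \<union> {(r_ex r, r_label r) | r. r \<in> set rs}"

definition dff_alg :: "('x \<times> 'y) set \<Rightarrow> ('x, 'y) dff_algorithm \<Rightarrow> bool" where
  "dff_alg H A \<longleftrightarrow> (\<forall>rs x. is_run A rs \<longrightarrow> A rs x \<in> allowed_pairs H rs)"

definition round_consistent :: "('x, 'y) teacher \<Rightarrow> ('x, 'y) round \<Rightarrow> bool" where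
  "round_consistent T r \<longleftrightarrow>
     (case r_fb r of
        None \<Rightarrow> fst T (r_ex r) = r_pred r
      | Some (y, \<phi>) \<Rightarrow> y = fst T (r_ex r) \<and> r_pred r \<noteq> y \<and> snd T (r_ex r) (r_expl r) = Some \<phi>)"

definition num_mistakes :: "('x, 'y) round list \<Rightarrow> nat" where
  "num_mistakes rs = length (filter (\<lambda>r. r_fb r \<noteq> None) rs)"

definition mistake_bound ::
  "('x, 'y) dff_algorithm \<Rightarrow> ('x, 'y) teacher set \<Rightarrow> ('x \<times> 'y) set \<Rightarrow> enat" where
  "mistake_bound A TT H =
     (SUP rs \<in> {rs. is_run A rs \<and> (\<exists>T\<in>teachers_H TT H. \<forall>r\<in>set rs. round_consistent T r)}.
        enat (num_mistakes rs))"

text \<open>A tree is represented by its set of root-to-node paths (lists of edge labels,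
  prefix closed, containing the root []) together with the node labelling.\<close>

type_synonym ('x, 'y) node = "'y option \<times> ('x \<Rightarrow> bool) option \<times> 'x option"

definition n_y :: "('x, 'y) node \<Rightarrow> 'y option" where "n_y v = fst v"
definition n_phi :: "('x, 'y) node \<Rightarrow> ('x \<Rightarrow> bool) option" where "n_phi v = fst (snd v)"
definition n_x :: "('x, 'y) node \<Rightarrow> 'x option" where "n_x v = snd (snd v)"

definition is_leaf :: "('x \<times> 'y) list set \<Rightarrow> ('x \<times> 'y) list \<Rightarrow> bool" where
  "is_leaf P p \<longleftrightarrow> p \<in> P \<and> (\<forall>e. p @ [e] \<notin> P)"

definition dff_tree ::
  "('x \<Rightarrow> bool) set \<Rightarrow> ('x \<times> 'y) list set \<Rightarrow> (('x \<times> 'y) list \<Rightarrow> ('x, 'y) node) \<Rightarrow> bool" where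
  "dff_tree Phi P N \<longleftrightarrow>
     [] \<in> P \<and>
     (\<forall>p e. p @ [e] \<in> P \<longrightarrow> p \<in> P) \<and>
     n_y (N []) = None \<and> n_phi (N []) = None \<and>
     (\<forall>p\<in>P. set_option (n_phi (N p)) \<subseteq> Phi) \<and>
     (\<forall>p\<in>P. n_x (N p) = None \<longleftrightarrow> is_leaf P p) \<and>
     (\<forall>p xh yh. p @ [(xh, yh)] \<in> P \<longrightarrow>
        n_y (N (p @ [(xh, yh)])) \<noteq> Some yh \<longrightarrow> n_phi (N (p @ [(xh, yh)])) \<noteq> None)"

definition path_examples ::
  "(('x \<times> 'y) list \<Rightarrow> ('x, 'y) node) \<Rightarrow> ('x \<times> 'y) list \<Rightarrow> ('x \<times> 'y) set" where
  "path_examples N p = {(x, y) | x y i. i < length p \<and>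
      n_x (N (take i p)) = Some x \<and> n_y (N (take (Suc i) p)) = Some y}"

definition path_consistent ::
  "(('x \<times> 'y) list \<Rightarrow> ('x, 'y) node) \<Rightarrow> ('x \<times> 'y) list \<Rightarrow> ('x, 'y) teacher \<Rightarrow> bool" where
  "path_consistent N p T \<longleftrightarrow>
     (\<forall>i < length p. \<forall>x. n_x (N (take i p)) = Some x \<longrightarrow>
        n_y (N (take (Suc i) p)) = Some (fst T x) \<and>
        (fst T x \<noteq> snd (p ! i) \<longrightarrow> snd T x (fst (p ! i)) = n_phi (N (take (Suc i) p))))"

definition shattered ::
  "('x \<Rightarrow> bool) set \<Rightarrow> ('x, 'y) teacher set \<Rightarrow> ('x \<times> 'y) set \<Rightarrow>
   ('x \<times> 'y) list set \<Rightarrow> (('x \<times> 'y) list \<Rightarrow> ('x, 'y) node) \<Rightarrow> nat \<Rightarrow> bool" where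
  "shattered Phi TT H P N d \<longleftrightarrow>
     dff_tree Phi P N \<and>
     \<comment> \<open>(1)\<close>
     (\<forall>p xh yh. p @ [(xh, yh)] \<in> P \<longrightarrow> n_y (N (p @ [(xh, yh)])) \<noteq> Some yh) \<and>
     \<comment> \<open>(2)\<close>
     (\<forall>p\<in>P. \<not> is_leaf P p \<longrightarrow> {e. p @ [e] \<in> P} = H \<union> path_examples N p) \<and>
     \<comment> \<open>(3)\<close>
     (\<forall>p. is_leaf P p \<longrightarrow> (\<exists>T\<in>teachers_H TT H. path_consistent N p T)) \<and>
     \<comment> \<open>(4): every root-to-leaf path has exactly d edges (and the tree has depth d)\<close>
     (\<forall>p\<in>P. length p \<le> d \<and> (is_leaf P p \<longleftrightarrow> length p = d))"

definition DFFdim :: "('x \<Rightarrow> bool) set \<Rightarrow> ('x, 'y) teacher set \<Rightarrow> ('x \<times> 'y) set \<Rightarrow> enat" where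
  "DFFdim Phi TT H = (SUP d \<in> {d. \<exists>P N. shattered Phi TT H P N d}. enat d)"

end

theory Submission
  imports Defs
begin

lemma node_simps[simp]: "n_y (a,b,c) = a" "n_phi (a,b,c) = b" "n_x (a,b,c) = c"
  by (simp_all add: n_y_def n_phi_def n_x_def)

definition SS where "SS Phi V H' = {d. \<exists>P N. shattered Phi V H' P N d}"

lemma DFFdim_SS: "DFFdim Phi V H' = (SUP d\<in>SS Phi V H'. enat d)"
  by (simp add: DFFdim_def SS_def)

lemma shattered_zero:
  assumes "teachers_H V H' \<noteq> {}"
  shows "shattered Phi V H' {[]} (\<lambda>_. (None, None, None)) 0"
proof -
  obtain T where "T \<in> teachers_H V H'" using assms by blast
  moreover have "path_consistent (\<lambda>_. (None, None, None)) [] T"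
    by (simp add: path_consistent_def)
  moreover have "is_leaf {[]} p \<longleftrightarrow> p = []" for p :: "('a \<times> 'b) list"
    by (auto simp: is_leaf_def)
  ultimately show ?thesis
    unfolding shattered_def dff_tree_def by (simp add: path_examples_def) blast
qed

lemma ext_leaf:
  assumes sh: "shattered Phi V H' P N d" and p: "p \<in> P"
  shows "\<exists>r. is_leaf P (p @ r)"
proof -
  have len: "\<And>p. p \<in> P \<Longrightarrow> length p \<le> d \<and> (is_leaf P p \<longleftrightarrow> length p = d)"
    using sh by (auto simp: shattered_def)
  have "\<forall>p. p \<in> P \<longrightarrow> d - length p = n \<longrightarrow> (\<exists>r. is_leaf P (p @ r))" for n
  proof (induction n)
    case 0
    then show ?case using len by (metis append_Nil2 diff_is_0_eq le_antisym)
  next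
    case (Suc n)
    show ?case
    proof (intro allI impI)
      fix p assume pP: "p \<in> P" and dn: "d - length p = Suc n"
      show "\<exists>r. is_leaf P (p @ r)"
      proof (cases "is_leaf P p")
        case True then show ?thesis by (metis append_Nil2)
      next
        case False
        then obtain e where e: "p @ [e] \<in> P" using pP by (auto simp: is_leaf_def)
        have "d - length (p @ [e]) = n" using dn by simp
        then obtain r where "is_leaf P ((p @ [e]) @ r)" using Suc.IH e by blast
        then show ?thesis by (metis append_Cons append_assoc self_append_conv2)
      qed
    qed
  qed
  then show ?thesis using p by blast
qed

lemma path_consistent_prefix:
  assumes "path_consistent N (p @ r) T"
  shows "path_consistent N p T"
  unfolding path_consistent_def
proof (intro allI impI)
  fix i x assume i: "i < length p" and x: "n_x (N (take i p)) = Some x"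
  have t1: "take i (p @ r) = take i p" "take (Suc i) (p @ r) = take (Suc i) p"
    "(p @ r) ! i = p ! i" using i by (auto simp: nth_append)
  show "n_y (N (take (Suc i) p)) = Some (fst T x) \<and>
        (fst T x \<noteq> snd (p ! i) \<longrightarrow> snd T x (fst (p ! i)) = n_phi (N (take (Suc i) p)))"
    using assms i x t1 unfolding path_consistent_def
    by (metis length_append trans_less_add1)
qed

lemma trunc:
  assumes sh: "shattered Phi V H' P N d" and kd: "k \<le> d"
  shows "shattered Phi V H' {p\<in>P. length p \<le> k}
           (\<lambda>p. if length p = k then (n_y (N p), n_phi (N p), None) else N p) k"
    (is "shattered _ _ _ ?P ?N _")
proof -
  have len: "\<And>p. p \<in> P \<Longrightarrow> length p \<le> d \<and> (is_leaf P p \<longleftrightarrow> length p = d)"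
    using sh by (auto simp: shattered_def)
  have dt: "dff_tree Phi P N" using sh by (simp add: shattered_def)
  have leafP': "is_leaf ?P p \<longleftrightarrow> p \<in> P \<and> length p = k" for p
  proof
    assume l: "is_leaf ?P p"
    then have pP: "p \<in> P" "length p \<le> k" by (auto simp: is_leaf_def)
    show "p \<in> P \<and> length p = k"
    proof (rule ccontr)
      assume "\<not> ?thesis"
      then have "length p < k" using pP by simp
      then have "\<not> is_leaf P p" using len pP kd by auto
      then obtain e where "p @ [e] \<in> P" using pP by (auto simp: is_leaf_def)
      then have "p @ [e] \<in> ?P" using \<open>length p < k\<close> by simp
      then show False using l unfolding is_leaf_def by blast
    qed
  next
    assume "p \<in> P \<and> length p = k"
    then show "is_leaf ?P p" by (auto simp: is_leaf_def)
  qed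
  have Nx: "n_x (?N p) = (if length p = k then None else n_x (N p))" for p by simp
  have Ny: "n_y (?N p) = n_y (N p)" "n_phi (?N p) = n_phi (N p)" for p by simp_all
  have pe: "path_examples ?N p = path_examples N p" if "length p < k" for p
  proof -
    show ?thesis using that unfolding path_examples_def by auto
  qed
  have "dff_tree Phi ?P ?N"
    unfolding dff_tree_def
  proof (intro conjI ballI allI impI)
    show "[] \<in> ?P" using dt by (simp add: dff_tree_def)
    show "p \<in> ?P" if "p @ [e] \<in> ?P" for p e
    proof -
      have "p \<in> P" using that dt unfolding dff_tree_def by blast
      then show ?thesis using that by simp
    qed
    show "n_y (?N []) = None" "n_phi (?N []) = None" using dt by (simp_all add: dff_tree_def)
    show "set_option (n_phi (?N p)) \<subseteq> Phi" if "p \<in> ?P" for p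
      using that dt by (auto simp: dff_tree_def)
    show "(n_x (?N p) = None) = is_leaf ?P p" if "p \<in> ?P" for p
    proof (cases "length p = k")
      case True then show ?thesis using that leafP' by simp
    next
      case False
      then have "length p < d" using that kd by auto
      then have "\<not> is_leaf P p" using len that by auto
      moreover have "(n_x (N p) = None) = is_leaf P p" using dt that unfolding dff_tree_def by blast
      moreover have "\<not> is_leaf ?P p" using leafP' False by blast
      ultimately show ?thesis using False by simp
    qed
    show "n_phi (?N (p @ [(xh, yh)])) \<noteq> None"
      if "p @ [(xh, yh)] \<in> ?P" "n_y (?N (p @ [(xh, yh)])) \<noteq> Some yh" for p xh yh
      using that dt unfolding dff_tree_def Ny by auto
  qed
  moreover have "\<forall>p xh yh. p @ [(xh, yh)] \<in> ?P \<longrightarrow> n_y (?N (p @ [(xh, yh)])) \<noteq> Some yh"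
    using sh unfolding shattered_def Ny by auto
  moreover have "\<forall>p\<in>?P. \<not> is_leaf ?P p \<longrightarrow> {e. p @ [e] \<in> ?P} = H' \<union> path_examples ?N p"
  proof (intro ballI impI)
    fix p assume pP: "p \<in> ?P" and nl: "\<not> is_leaf ?P p"
    then have lk: "length p < k" using leafP' by auto
    then have "\<not> is_leaf P p" using len pP kd by auto
    then have "{e. p @ [e] \<in> P} = H' \<union> path_examples N p" using sh pP
      by (auto simp: shattered_def)
    moreover have "{e. p @ [e] \<in> ?P} = {e. p @ [e] \<in> P}" using lk by auto
    ultimately show "{e. p @ [e] \<in> ?P} = H' \<union> path_examples ?N p" using pe lk by simp
  qed
  moreover have "\<forall>p. is_leaf ?P p \<longrightarrow> (\<exists>T\<in>teachers_H V H'. path_consistent ?N p T)"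
  proof (intro allI impI)
    fix p assume "is_leaf ?P p"
    then have pP: "p \<in> P" and lk: "length p = k" using leafP' by auto
    obtain r where lr: "is_leaf P (p @ r)" using ext_leaf[OF sh pP] by blast
    then obtain T where T: "T \<in> teachers_H V H'" "path_consistent N (p @ r) T"
      using sh by (auto simp: shattered_def)
    have pc: "path_consistent N p T" using path_consistent_prefix T(2) by blast
    have "path_consistent ?N p T"
      unfolding path_consistent_def
    proof (intro allI impI)
      fix i x assume i: "i < length p" and x: "n_x (?N (take i p)) = Some x"
      then have x': "n_x (N (take i p)) = Some x" using lk by simp
      show "n_y (?N (take (Suc i) p)) = Some (fst T x) \<and>
        (fst T x \<noteq> snd (p ! i) \<longrightarrow> snd T x (fst (p ! i)) = n_phi (?N (take (Suc i) p)))"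
        using pc i x' unfolding path_consistent_def Ny by blast
    qed
    then show "\<exists>T\<in>teachers_H V H'. path_consistent ?N p T" using T(1) by blast
  qed
  moreover have "\<forall>p\<in>?P. length p \<le> k \<and> (is_leaf ?P p \<longleftrightarrow> length p = k)"
    using leafP' by auto
  ultimately show ?thesis unfolding shattered_def by blast
qed


lemma SS_down: assumes "d \<in> SS Phi V H'" "k \<le> d" shows "k \<in> SS Phi V H'"
  using assms trunc unfolding SS_def by blast

lemma SS_zero: assumes "teachers_H V H' \<noteq> {}" shows "0 \<in> SS Phi V H'"
  using shattered_zero[OF assms] unfolding SS_def by blast

lemma dim_fin:
  assumes ne: "teachers_H V H' \<noteq> {}" and k: "DFFdim Phi V H' = enat k"
  shows "k \<in> SS Phi V H'" "Suc k \<notin> SS Phi V H'"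
proof -
  have le: "d \<le> k" if "d \<in> SS Phi V H'" for d
  proof -
    have "enat d \<le> DFFdim Phi V H'" unfolding DFFdim_SS using that by (rule SUP_upper)
    then show ?thesis using k by simp
  qed
  then show "Suc k \<notin> SS Phi V H'" using Suc_n_not_le_n by blast
  show "k \<in> SS Phi V H'"
  proof (rule ccontr)
    assume nk: "k \<notin> SS Phi V H'"
    then have "k \<noteq> 0" using SS_zero[OF ne, of Phi] by (cases k) auto
    have "d \<le> k - 1" if "d \<in> SS Phi V H'" for d
    proof -
      have "d \<noteq> k" using nk that by blast
      then show ?thesis using le[OF that] by simp
    qed
    then have "DFFdim Phi V H' \<le> enat (k - 1)" unfolding DFFdim_SS
      by (intro SUP_least) simp
    then show False using k \<open>k \<noteq> 0\<close> by simp
  qed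
qed

lemma dim_ge:
  assumes ne: "teachers_H V H' \<noteq> {}" and k: "enat k \<le> DFFdim Phi V H'"
  shows "k \<in> SS Phi V H'"
proof (cases "k = 0")
  case True then show ?thesis using SS_zero[OF ne] by simp
next
  case False
  then have "enat (k - 1) < enat k" by simp
  then have "enat (k - 1) < DFFdim Phi V H'" using k by (rule less_le_trans)
  then obtain d where "d \<in> SS Phi V H'" "enat (k - 1) < enat d"
    unfolding DFFdim_SS less_SUP_iff by blast
  then have "k \<le> d" using False by simp
  then show ?thesis using SS_down \<open>d \<in> SS Phi V H'\<close> by blast
qed

definition resp :: "('x, 'y) teacher set \<Rightarrow> 'x \<Rightarrow> 'x \<Rightarrow> ('x, 'y) teacher \<Rightarrow> ('x, 'y) teacher set" where
  "resp V x xh T = {T' \<in> V. fst T' x = fst T x \<and> snd T' x xh = snd T x xh}"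

lemma combine:
  fixes x :: 'x and Tf :: "'x \<times> 'y \<Rightarrow> ('x, 'y) teacher"
  assumes tc: "teacher_class Phi V" and Hne: "H' \<noteq> {}"
    and cons: "\<forall>T\<in>V. consistent_hist H' T"
    and sub: "\<And>e. e \<in> H' \<Longrightarrow> Tf e \<in> V \<and> fst (Tf e) x \<noteq> snd e \<and>
       shattered Phi (resp V x (fst e) (Tf e)) (H' \<union> {(x, fst (Tf e) x)}) (Pf e) (Nf e) k"
  shows "\<exists>P N. shattered Phi V H' P N (Suc k)"
proof -
  define P where "P = insert [] {e # q | e q. e \<in> H' \<and> q \<in> Pf e}"
  define N where "N = (\<lambda>p. case p of [] \<Rightarrow> (None, None, Some x)
     | e # q \<Rightarrow> if q = [] then (Some (fst (Tf e) x), snd (Tf e) x (fst e), n_x (Nf e [])) else Nf e q)"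
  have memP: "e # q \<in> P \<longleftrightarrow> e \<in> H' \<and> q \<in> Pf e" for e q unfolding P_def by blast
  have nilP: "[] \<in> P" by (simp add: P_def)
  have N0: "N [] = (None, None, Some x)" by (simp add: N_def)
  have Nx: "n_x (N (e # q)) = n_x (Nf e q)" for e q by (cases q) (auto simp: N_def)
  have Nyc: "n_y (N (e # q)) = n_y (Nf e q)" "n_phi (N (e # q)) = n_phi (Nf e q)"
    if "q \<noteq> []" for e q using that by (auto simp: N_def)
  have Ny1: "n_y (N [e]) = Some (fst (Tf e) x)" "n_phi (N [e]) = snd (Tf e) x (fst e)" for e
    by (auto simp: N_def)
  have shs: "shattered Phi (resp V x (fst e) (Tf e)) (H' \<union> {(x, fst (Tf e) x)}) (Pf e) (Nf e) k"
    and TV: "Tf e \<in> V" and Tne: "fst (Tf e) x \<noteq> snd e" if "e \<in> H'" for e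
    using sub[OF that] by auto
  have dts: "dff_tree Phi (Pf e) (Nf e)" if "e \<in> H'" for e using shs[OF that] by (simp add: shattered_def)
  have nilPf: "[] \<in> Pf e" if "e \<in> H'" for e using dts[OF that] by (simp add: dff_tree_def)
  have dtPre: "q \<in> Pf e" if "e \<in> H'" "q @ [e'] \<in> Pf e" for e q e'
    using dts[OF that(1)] that(2) unfolding dff_tree_def by blast
  have dtPhi: "set_option (n_phi (Nf e q)) \<subseteq> Phi" if "e \<in> H'" "q \<in> Pf e" for e q
    using dts[OF that(1)] that(2) unfolding dff_tree_def by blast
  have dtLeaf: "(n_x (Nf e q) = None) = is_leaf (Pf e) q" if "e \<in> H'" "q \<in> Pf e" for e q
    using dts[OF that(1)] that(2) unfolding dff_tree_def by blast
  have dtEdge: "n_phi (Nf e (q @ [(xh, yh)])) \<noteq> None"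
    if "e \<in> H'" "q @ [(xh, yh)] \<in> Pf e" "n_y (Nf e (q @ [(xh, yh)])) \<noteq> Some yh" for e q xh yh
    using dts[OF that(1)] that(2,3) unfolding dff_tree_def by blast
  have phi1: "\<exists>\<phi>\<in>Phi. snd (Tf e) x (fst e) = Some \<phi>" if "e \<in> H'" for e
  proof -
    obtain xh yh where e: "e = (xh, yh)" by force
    have "is_teacher Phi (Tf e)" using tc TV[OF that] by (simp add: teacher_class_def)
    moreover have "fst (Tf e) xh = yh" using cons TV[OF that] that e
      by (auto simp: consistent_hist_def)
    then have "fst (Tf e) x \<noteq> fst (Tf e) xh" using Tne[OF that] e by simp
    ultimately show ?thesis unfolding is_teacher_def e fst_conv by blast
  qed
  have leafP: "is_leaf P (e # q) \<longleftrightarrow> e \<in> H' \<and> is_leaf (Pf e) q" for e q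
    by (auto simp: is_leaf_def memP)
  have notleaf0: "\<not> is_leaf P []"
  proof -
    obtain e where "e \<in> H'" using Hne by blast
    then have "[] @ [e] \<in> P" using memP nilPf by simp
    then show ?thesis unfolding is_leaf_def by blast
  qed
  have pe: "path_examples N (e # q) = insert (x, fst (Tf e) x) (path_examples (Nf e) q)" for e q
  proof
    show "path_examples N (e # q) \<subseteq> insert (x, fst (Tf e) x) (path_examples (Nf e) q)"
    proof
      fix z assume "z \<in> path_examples N (e # q)"
      then obtain a b i where z: "z = (a, b)" and i: "i < length (e # q)"
        and a: "n_x (N (take i (e # q))) = Some a" and b: "n_y (N (take (Suc i) (e # q))) = Some b"
        unfolding path_examples_def by blast
      show "z \<in> insert (x, fst (Tf e) x) (path_examples (Nf e) q)"
      proof (cases i)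
        case 0 then show ?thesis using z a b N0 Ny1 by simp
      next
        case (Suc j)
        then have j: "j < length q" using i by simp
        have "n_x (Nf e (take j q)) = Some a" using a Suc Nx by simp
        moreover have "take (Suc j) q \<noteq> []" using j by (cases q) auto
        then have "n_y (Nf e (take (Suc j) q)) = Some b" using b Suc Nyc by simp
        ultimately show ?thesis using j z unfolding path_examples_def by blast
      qed
    qed
  next
    show "insert (x, fst (Tf e) x) (path_examples (Nf e) q) \<subseteq> path_examples N (e # q)"
    proof
      fix z assume "z \<in> insert (x, fst (Tf e) x) (path_examples (Nf e) q)"
      then show "z \<in> path_examples N (e # q)"
      proof
        assume "z = (x, fst (Tf e) x)"
        moreover have "n_x (N (take 0 (e # q))) = Some x" "n_y (N (take (Suc 0) (e # q))) = Some (fst (Tf e) x)"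
          using N0 Ny1 by auto
        ultimately show ?thesis unfolding path_examples_def by fastforce
      next
        assume "z \<in> path_examples (Nf e) q"
        then obtain a b j where z: "z = (a, b)" and j: "j < length q"
          and a: "n_x (Nf e (take j q)) = Some a" and b: "n_y (Nf e (take (Suc j) q)) = Some b"
          unfolding path_examples_def by blast
        have "n_x (N (take (Suc j) (e # q))) = Some a" using a Nx by simp
        moreover have "take (Suc j) q \<noteq> []" using j by (cases q) auto
        then have "n_y (N (take (Suc (Suc j)) (e # q))) = Some b" using b Nyc by simp
        moreover have "Suc j < length (e # q)" using j by simp
        ultimately show ?thesis using z unfolding path_examples_def by blast
      qed
    qed
  qed
  have "dff_tree Phi P N"
    unfolding dff_tree_def
  proof (intro conjI ballI allI impI)
    show "[] \<in> P" by (rule nilP)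
    show "p \<in> P" if "p @ [e] \<in> P" for p e
    proof (cases p)
      case Nil then show ?thesis using nilP by simp
    next
      case (Cons e' q)
      then have "e' \<in> H'" "q @ [e] \<in> Pf e'" using that memP by auto
      then have "q \<in> Pf e'" using dtPre by blast
      then show ?thesis using Cons memP \<open>e' \<in> H'\<close> by simp
    qed
    show "n_y (N []) = None" "n_phi (N []) = None" using N0 by simp_all
    show "set_option (n_phi (N p)) \<subseteq> Phi" if "p \<in> P" for p
    proof (cases p)
      case Nil then show ?thesis using N0 by simp
    next
      case (Cons e q)
      then have eq: "e \<in> H'" "q \<in> Pf e" using that memP by auto
      show ?thesis
      proof (cases "q = []")
        case True
        obtain \<phi> where "\<phi> \<in> Phi" "snd (Tf e) x (fst e) = Some \<phi>" using phi1[OF eq(1)] by blast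
        then show ?thesis using Cons True Ny1(2)[of e] by simp
      next
        case False then show ?thesis using Cons Nyc[OF False] dtPhi[OF eq] by simp
      qed
    qed
    show "(n_x (N p) = None) = is_leaf P p" if "p \<in> P" for p
    proof (cases p)
      case Nil then show ?thesis using N0 notleaf0 by simp
    next
      case (Cons e q)
      then have eq: "e \<in> H'" "q \<in> Pf e" using that memP by auto
      then show ?thesis using Cons Nx leafP dtLeaf[OF eq] by simp
    qed
    show "n_phi (N (p @ [(xh, yh)])) \<noteq> None"
      if "p @ [(xh, yh)] \<in> P" "n_y (N (p @ [(xh, yh)])) \<noteq> Some yh" for p xh yh
    proof (cases p)
      case Nil
      then have "(xh, yh) \<in> H'" using that memP by simp
      then show ?thesis using Nil Ny1 phi1 by force
    next
      case (Cons e q)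
      then have eq: "e \<in> H'" "q @ [(xh, yh)] \<in> Pf e" using that memP by auto
      then show ?thesis using Cons Nyc[of "q @ [(xh, yh)]"] that dtEdge[OF eq] by simp
    qed
  qed
  moreover have "\<forall>p xh yh. p @ [(xh, yh)] \<in> P \<longrightarrow> n_y (N (p @ [(xh, yh)])) \<noteq> Some yh"
  proof (intro allI impI)
    fix p xh yh assume that: "p @ [(xh, yh)] \<in> P"
    show "n_y (N (p @ [(xh, yh)])) \<noteq> Some yh"
    proof (cases p)
      case Nil
      then have "(xh, yh) \<in> H'" using that memP by simp
      then show ?thesis using Nil Ny1 Tne by force
    next
      case (Cons e q)
      then have eq: "e \<in> H'" "q @ [(xh, yh)] \<in> Pf e" using that memP by auto
      moreover have "n_y (Nf e (q @ [(xh, yh)])) \<noteq> Some yh"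
        using shs[OF eq(1)] eq(2) unfolding shattered_def by blast
      ultimately show ?thesis using Cons Nyc[of "q @ [(xh, yh)]"] by simp
    qed
  qed
  moreover have "\<forall>p\<in>P. \<not> is_leaf P p \<longrightarrow> {e. p @ [e] \<in> P} = H' \<union> path_examples N p"
  proof (intro ballI impI)
    fix p assume pP: "p \<in> P" and nl: "\<not> is_leaf P p"
    show "{e. p @ [e] \<in> P} = H' \<union> path_examples N p"
    proof (cases p)
      case Nil
      have "path_examples N [] = {}" by (simp add: path_examples_def)
      then show ?thesis using Nil memP nilPf by auto
    next
      case (Cons e q)
      then have eq: "e \<in> H'" "q \<in> Pf e" "\<not> is_leaf (Pf e) q" using pP nl memP leafP by auto
      then have "{e'. q @ [e'] \<in> Pf e} = (H' \<union> {(x, fst (Tf e) x)}) \<union> path_examples (Nf e) q"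
        using shs[OF eq(1)] unfolding shattered_def by blast
      moreover have "{e'. p @ [e'] \<in> P} = {e'. q @ [e'] \<in> Pf e}" using Cons memP eq(1) by simp
      ultimately show ?thesis using Cons eq pe by simp
    qed
  qed
  moreover have "\<forall>p. is_leaf P p \<longrightarrow> (\<exists>T\<in>teachers_H V H'. path_consistent N p T)"
  proof (intro allI impI)
    fix p assume lp: "is_leaf P p"
    then obtain e q where p: "p = e # q" using notleaf0 by (cases p) auto
    then have eq: "e \<in> H'" "is_leaf (Pf e) q" using lp leafP by auto
    then obtain T where T: "T \<in> teachers_H (resp V x (fst e) (Tf e)) (H' \<union> {(x, fst (Tf e) x)})"
      "path_consistent (Nf e) q T"
      using shs[OF eq(1)] unfolding shattered_def by blast
    have TV': "T \<in> V" "fst T x = fst (Tf e) x" "snd T x (fst e) = snd (Tf e) x (fst e)"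
      "consistent_hist H' T"
      using T(1) by (auto simp: teachers_H_def resp_def consistent_hist_def)
    have "path_consistent N (e # q) T"
      unfolding path_consistent_def
    proof (intro allI impI)
      fix i a assume i: "i < length (e # q)" and a: "n_x (N (take i (e # q))) = Some a"
      show "n_y (N (take (Suc i) (e # q))) = Some (fst T a) \<and>
        (fst T a \<noteq> snd ((e # q) ! i) \<longrightarrow> snd T a (fst ((e # q) ! i)) = n_phi (N (take (Suc i) (e # q))))"
      proof (cases i)
        case 0
        then have "a = x" using a N0 by simp
        then show ?thesis using 0 Ny1 TV' by simp
      next
        case (Suc j)
        then have j: "j < length q" using i by simp
        have a': "n_x (Nf e (take j q)) = Some a" using a Suc Nx by simp
        have ne: "take (Suc j) q \<noteq> []" using j by (cases q) auto
        have "n_y (Nf e (take (Suc j) q)) = Some (fst T a) \<and>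
          (fst T a \<noteq> snd (q ! j) \<longrightarrow> snd T a (fst (q ! j)) = n_phi (Nf e (take (Suc j) q)))"
          using T(2) j a' unfolding path_consistent_def by blast
        then show ?thesis using Suc Nyc[OF ne] by simp
      qed
    qed
    moreover have "T \<in> teachers_H V H'" using TV' by (simp add: teachers_H_def)
    ultimately show "\<exists>T\<in>teachers_H V H'. path_consistent N p T" using p by blast
  qed
  moreover have "\<forall>p\<in>P. length p \<le> Suc k \<and> (is_leaf P p \<longleftrightarrow> length p = Suc k)"
  proof
    fix p assume pP: "p \<in> P"
    show "length p \<le> Suc k \<and> (is_leaf P p \<longleftrightarrow> length p = Suc k)"
    proof (cases p)
      case Nil then show ?thesis using notleaf0 by simp
    next
      case (Cons e q)
      then have eq: "e \<in> H'" "q \<in> Pf e" using pP memP by auto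
      then have "length q \<le> k \<and> (is_leaf (Pf e) q \<longleftrightarrow> length q = k)"
        using shs[OF eq(1)] unfolding shattered_def by blast
      then show ?thesis using Cons leafP eq by simp
    qed
  qed
  ultimately show ?thesis unfolding shattered_def by blast
qed


definition good :: "('x \<Rightarrow> bool) set \<Rightarrow> ('x, 'y) teacher set \<Rightarrow> ('x \<times> 'y) set \<Rightarrow> 'x \<Rightarrow> 'x \<times> 'y \<Rightarrow> bool" where
  "good Phi V H' x e = (\<forall>T\<in>V. fst T x \<noteq> snd e \<longrightarrow>
      DFFdim Phi (resp V x (fst e) T) (H' \<union> {(x, fst T x)}) < DFFdim Phi V H')"

lemma key:
  assumes tc: "teacher_class Phi V" and Vne: "V \<noteq> {}" and Hne: "H' \<noteq> {}"
    and cons: "\<forall>T\<in>V. consistent_hist H' T" and k: "DFFdim Phi V H' = enat k"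
  shows "\<exists>e\<in>H'. good Phi V H' x e"
proof (rule ccontr)
  assume "\<not> ?thesis"
  then have bad: "\<forall>e\<in>H'. \<exists>T\<in>V. fst T x \<noteq> snd e \<and>
      \<not> DFFdim Phi (resp V x (fst e) T) (H' \<union> {(x, fst T x)}) < enat k"
    unfolding good_def k by blast
  have tH: "teachers_H V H' = V" using cons by (auto simp: teachers_H_def)
  have "\<forall>e\<in>H'. \<exists>T P N. T \<in> V \<and> fst T x \<noteq> snd e \<and>
      shattered Phi (resp V x (fst e) T) (H' \<union> {(x, fst T x)}) P N k"
  proof
    fix e assume e: "e \<in> H'"
    obtain T where T: "T \<in> V" "fst T x \<noteq> snd e"
      "\<not> DFFdim Phi (resp V x (fst e) T) (H' \<union> {(x, fst T x)}) < enat k"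
      using bad e by blast
    have "T \<in> teachers_H (resp V x (fst e) T) (H' \<union> {(x, fst T x)})"
      using T(1) cons by (auto simp: teachers_H_def resp_def consistent_hist_def)
    then have "k \<in> SS Phi (resp V x (fst e) T) (H' \<union> {(x, fst T x)})"
      using T(3) dim_ge[of "resp V x (fst e) T" "H' \<union> {(x, fst T x)}" k Phi]
      by (metis empty_iff not_le)
    then show "\<exists>T P N. T \<in> V \<and> fst T x \<noteq> snd e \<and>
      shattered Phi (resp V x (fst e) T) (H' \<union> {(x, fst T x)}) P N k"
      using T unfolding SS_def by blast
  qed
  then obtain Tf Pf Nf where
    f: "\<forall>e\<in>H'. Tf e \<in> V \<and> fst (Tf e) x \<noteq> snd e \<and>
      shattered Phi (resp V x (fst e) (Tf e)) (H' \<union> {(x, fst (Tf e) x)}) (Pf e) (Nf e) k"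
    by metis
  have "\<exists>P N. shattered Phi V H' P N (Suc k)"
    by (rule combine[OF tc Hne cons, of Tf x Pf Nf k]) (use f in blast)
  then have "Suc k \<in> SS Phi V H'" unfolding SS_def by blast
  moreover have "Suc k \<notin> SS Phi V H'" using dim_fin(2)[of V H' Phi k] tH Vne k by simp
  ultimately show False by blast
qed


lemma dt_pre: "dff_tree Phi P N \<Longrightarrow> p @ [e] \<in> P \<Longrightarrow> p \<in> P"
  unfolding dff_tree_def by blast
lemma dt_nx: "dff_tree Phi P N \<Longrightarrow> p \<in> P \<Longrightarrow> \<not> is_leaf P p \<Longrightarrow> \<exists>a. n_x (N p) = Some a"
proof -
  assume "dff_tree Phi P N" "p \<in> P" "\<not> is_leaf P p"
  then have "n_x (N p) \<noteq> None" unfolding dff_tree_def by blast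
  then show ?thesis by blast
qed
lemma dt_edge: "dff_tree Phi P N \<Longrightarrow> p @ [(xh, yh)] \<in> P \<Longrightarrow> n_y (N (p @ [(xh, yh)])) \<noteq> Some yh
   \<Longrightarrow> n_phi (N (p @ [(xh, yh)])) \<noteq> None"
  unfolding dff_tree_def by blast
lemma sh_dt: "shattered Phi V H' P N d \<Longrightarrow> dff_tree Phi P N"
  unfolding shattered_def by blast
lemma sh_1: "shattered Phi V H' P N d \<Longrightarrow> p @ [(xh, yh)] \<in> P \<Longrightarrow> n_y (N (p @ [(xh, yh)])) \<noteq> Some yh"
  unfolding shattered_def by blast
lemma sh_2: "shattered Phi V H' P N d \<Longrightarrow> p \<in> P \<Longrightarrow> \<not> is_leaf P p \<Longrightarrow> {e. p @ [e] \<in> P} = H' \<union> path_examples N p"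
  unfolding shattered_def by blast
lemma sh_3: "shattered Phi V H' P N d \<Longrightarrow> is_leaf P p \<Longrightarrow> \<exists>T\<in>teachers_H V H'. path_consistent N p T"
  unfolding shattered_def by blast
lemma sh_4: "shattered Phi V H' P N d \<Longrightarrow> p \<in> P \<Longrightarrow> length p \<le> d \<and> (is_leaf P p \<longleftrightarrow> length p = d)"
  unfolding shattered_def by blast

lemma prefix_in:
  assumes dt: "dff_tree Phi P N" and p: "q @ r \<in> P"
  shows "q \<in> P"
  using p
proof (induction r rule: rev_induct)
  case Nil then show ?case by simp
next
  case (snoc a r)
  then have "(q @ r) @ [a] \<in> P" by simp
  then have "q @ r \<in> P" using dt_pre[OF dt] by blast
  then show ?case using snoc.IH by blast
qed

lemma take_in:
  assumes "dff_tree Phi P N" "p \<in> P" shows "take j p \<in> P"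
  using prefix_in[OF assms(1), of "take j p" "drop j p"] assms(2) by simp

lemma ny_some:
  assumes sh: "shattered Phi V H' P N d" and pe: "p @ [e] \<in> P"
  shows "\<exists>y. n_y (N (p @ [e])) = Some y"
proof -
  have dt: "dff_tree Phi P N" using sh by (rule sh_dt)
  have pP: "p \<in> P" using dt_pre[OF dt pe] .
  have "\<not> is_leaf P p" using pe unfolding is_leaf_def by blast
  then obtain a where a: "n_x (N p) = Some a" using dt_nx[OF dt pP] by blast
  obtain r where "is_leaf P ((p @ [e]) @ r)" using ext_leaf[OF sh pe] by blast
  then obtain T where "path_consistent N ((p @ [e]) @ r) T"
    using sh_3[OF sh] by blast
  then have "path_consistent N (p @ [e]) T" by (rule path_consistent_prefix)
  moreover have "length p < length (p @ [e])" "take (length p) (p @ [e]) = p"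
    "take (Suc (length p)) (p @ [e]) = p @ [e]" by simp_all
  ultimately have "n_y (N (take (Suc (length p)) (p @ [e]))) = Some (fst T a)"
    using a unfolding path_consistent_def by metis
  then show ?thesis by simp
qed

definition rnd :: "(('x \<times> 'y) list \<Rightarrow> ('x, 'y) node) \<Rightarrow> ('x \<times> 'y) list \<Rightarrow> nat \<Rightarrow> ('x, 'y) round" where
  "rnd N p j = Round (the (n_x (N (take j p)))) (fst (p ! j)) (snd (p ! j))
      (Some (the (n_y (N (take (Suc j) p))), the (n_phi (N (take (Suc j) p)))))"

lemma ap_eq:
  assumes sh: "shattered Phi V H' P N d" and pP: "p \<in> P" and lp: "length p \<le> d"
    and lr: "length rs = length p" and rs: "\<forall>j<length p. rs ! j = rnd N p j"
  shows "allowed_pairs H rs = H \<union> path_examples N p"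
proof -
  have dt: "dff_tree Phi P N" using sh by (rule sh_dt)
  have len: "\<And>p. p \<in> P \<Longrightarrow> length p \<le> d \<and> (is_leaf P p \<longleftrightarrow> length p = d)"
    using sh_4[OF sh] by blast
  have nx: "\<exists>a. n_x (N (take j p)) = Some a" if j: "j < length p" for j
  proof -
    have tp: "take j p \<in> P" using take_in[OF dt pP] .
    have "length (take j p) < d" using j lp by simp
    then have "\<not> is_leaf P (take j p)" using len[OF tp] by simp
    then show ?thesis using dt_nx[OF dt tp] by blast
  qed
  have ny: "\<exists>b. n_y (N (take (Suc j) p)) = Some b" if j: "j < length p" for j
  proof -
    have "take (Suc j) p = take j p @ [p ! j]" using j by (simp add: take_Suc_conv_app_nth)
    moreover have "take (Suc j) p \<in> P" using take_in[OF dt pP] .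
    ultimately show ?thesis using ny_some[OF sh] by metis
  qed
  have "{(r_ex r, r_label r) | r. r \<in> set rs} = path_examples N p"
  proof
    show "{(r_ex r, r_label r) | r. r \<in> set rs} \<subseteq> path_examples N p"
    proof
      fix z assume "z \<in> {(r_ex r, r_label r) | r. r \<in> set rs}"
      then obtain r where z: "z = (r_ex r, r_label r)" and r: "r \<in> set rs" by blast
      then obtain j where j: "j < length p" "r = rs ! j" using lr by (metis in_set_conv_nth)
      obtain a where a: "n_x (N (take j p)) = Some a" using nx[OF j(1)] by blast
      obtain b where b: "n_y (N (take (Suc j) p)) = Some b" using ny[OF j(1)] by blast
      have "z = (a, b)" using z j rs a b by (simp add: rnd_def r_label_def)
      then show "z \<in> path_examples N p" unfolding path_examples_def using a b j(1) by blast
    qed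
  next
    show "path_examples N p \<subseteq> {(r_ex r, r_label r) | r. r \<in> set rs}"
    proof
      fix z assume "z \<in> path_examples N p"
      then obtain a b j where z: "z = (a, b)" and j: "j < length p"
        and a: "n_x (N (take j p)) = Some a" and b: "n_y (N (take (Suc j) p)) = Some b"
        unfolding path_examples_def by blast
      have "rs ! j \<in> set rs" using j lr by simp
      moreover have "z = (r_ex (rs ! j), r_label (rs ! j))"
        using z j rs a b by (simp add: rnd_def r_label_def)
      ultimately show "z \<in> {(r_ex r, r_label r) | r. r \<in> set rs}" by blast
    qed
  qed
  then show ?thesis unfolding allowed_pairs_def by simp
qed

lemma lower_tree:
  assumes A: "dff_alg H A" and sh: "shattered Phi TT H P N d"
  shows "enat d \<le> mistake_bound A TT H"
proof -
  have dt: "dff_tree Phi P N" using sh by (rule sh_dt)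
  have len: "\<And>p. p \<in> P \<Longrightarrow> length p \<le> d \<and> (is_leaf P p \<longleftrightarrow> length p = d)"
    using sh_4[OF sh] by blast
  have inv: "i \<le> d \<Longrightarrow> \<exists>p rs. p \<in> P \<and> length p = i \<and> length rs = i \<and> is_run A rs \<and>
       (\<forall>j<i. rs ! j = rnd N p j)" for i
  proof (induction i)
    case 0
    have "[] \<in> P" using dt unfolding dff_tree_def by blast
    then show ?case by (auto simp: is_run_def)
  next
    case (Suc i)
    then obtain p rs where p: "p \<in> P" "length p = i" "length rs = i" "is_run A rs"
      "\<forall>j<i. rs ! j = rnd N p j" by auto
    have "\<not> is_leaf P p" using len[OF p(1)] p(2) Suc.prems by simp
    then obtain a where a: "n_x (N p) = Some a" using dt_nx[OF dt p(1)] by blast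
    obtain xh yh where e: "A rs a = (xh, yh)" by force
    have "A rs a \<in> allowed_pairs H rs" using A p(4) by (simp add: dff_alg_def)
    also have "\<dots> = H \<union> path_examples N p"
    proof (rule ap_eq[OF sh p(1)])
      show "length p \<le> d" using p(2) Suc.prems by simp
      show "length rs = length p" using p(2,3) by simp
      show "\<forall>j<length p. rs ! j = rnd N p j" using p(2,5) by simp
    qed
    finally have "(xh, yh) \<in> H \<union> path_examples N p" using e by simp
    then have "(xh, yh) \<in> {e. p @ [e] \<in> P}"
      using sh_2[OF sh p(1) \<open>\<not> is_leaf P p\<close>] by simp
    then have pe: "p @ [(xh, yh)] \<in> P" by simp
    define p' where "p' = p @ [(xh, yh)]"
    define rs' where "rs' = rs @ [rnd N p' i]"
    have r1: "rnd N p' j = rnd N p j" if "j < i" for j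
    proof -
      have "take j p' = take j p" "take (Suc j) p' = take (Suc j) p" "p' ! j = p ! j"
        using that p(2) unfolding p'_def by (simp_all add: nth_append)
      then show ?thesis by (simp add: rnd_def)
    qed
    have r2: "rnd N p' i = Round a xh yh (Some (the (n_y (N p')), the (n_phi (N p'))))"
      unfolding rnd_def p'_def using p(2) a by (simp add: nth_append)
    have "is_run A rs'"
      unfolding is_run_def
    proof (intro allI impI)
      fix j assume j: "j < length rs'"
      show "A (take j rs') (r_ex (rs' ! j)) = (r_expl (rs' ! j), r_pred (rs' ! j))"
      proof (cases "j < i")
        case True
        then have "take j rs' = take j rs" "rs' ! j = rs ! j" using p(3) by (auto simp: rs'_def nth_append)
        then show ?thesis using p(4) True p(3) unfolding is_run_def by simp
      next
        case False
        then have "j = i" using j p(3) by (simp add: rs'_def)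
        then have "take j rs' = rs" "rs' ! j = rnd N p' i" using p(3) by (auto simp: rs'_def nth_append)
        then show ?thesis using r2 e by simp
      qed
    qed
    moreover have "\<forall>j<Suc i. rs' ! j = rnd N p' j"
    proof (intro allI impI)
      fix j assume "j < Suc i"
      show "rs' ! j = rnd N p' j"
      proof (cases "j < i")
        case True
        then have "rs' ! j = rs ! j" using p(3) by (simp add: rs'_def nth_append)
        then show ?thesis using r1[OF True] p(5) True by simp
      next
        case False
        then have "j = i" using \<open>j < Suc i\<close> by simp
        then show ?thesis using p(3) by (simp add: rs'_def nth_append)
      qed
    qed
    moreover have "p' \<in> P" "length p' = Suc i" "length rs' = Suc i"
      using pe p by (auto simp: p'_def rs'_def)
    ultimately show ?case by blast
  qed
  obtain p rs where p: "p \<in> P" "length p = d" "length rs = d" "is_run A rs"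
      "\<forall>j<d. rs ! j = rnd N p j" using inv[of d] by auto
  have "is_leaf P p" using len[OF p(1)] p(2) by simp
  then obtain T where T: "T \<in> teachers_H TT H" "path_consistent N p T"
    using sh_3[OF sh] by blast
  have rc: "round_consistent T (rs ! j)" if j: "j < d" for j
  proof -
    have tp: "take j p \<in> P" using take_in[OF dt p(1)] .
    have "length (take j p) < d" using j p(2) by simp
    then have "\<not> is_leaf P (take j p)" using len[OF tp] by simp
    then obtain a where a: "n_x (N (take j p)) = Some a" using dt_nx[OF dt tp] by blast
    have tj: "take (Suc j) p = take j p @ [(fst (p ! j), snd (p ! j))]"
      using j p(2) by (simp add: take_Suc_conv_app_nth)
    have c1: "n_y (N (take (Suc j) p)) = Some (fst T a)" and
      c2: "fst T a \<noteq> snd (p ! j) \<longrightarrow> snd T a (fst (p ! j)) = n_phi (N (take (Suc j) p))"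
      using T(2) j p(2) a unfolding path_consistent_def by blast+
    have tP: "take (Suc j) p \<in> P" using take_in[OF dt p(1)] .
    have ne: "n_y (N (take (Suc j) p)) \<noteq> Some (snd (p ! j))"
      using sh_1[OF sh, of "take j p" "fst (p ! j)" "snd (p ! j)"] tP tj by simp
    then have ne2: "fst T a \<noteq> snd (p ! j)" using c1 by simp
    have "n_phi (N (take (Suc j) p)) \<noteq> None"
      using dt_edge[OF dt, of "take j p" "fst (p ! j)" "snd (p ! j)"] tP tj ne by simp
    then obtain \<phi> where ph: "n_phi (N (take (Suc j) p)) = Some \<phi>" by blast
    show ?thesis using p(5) j a c1 c2 ne2 ph
      by (simp add: round_consistent_def rnd_def)
  qed
  have "\<forall>r\<in>set rs. round_consistent T r"
  proof
    fix r assume "r \<in> set rs"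
    then obtain j where "j < length rs" "r = rs ! j" by (auto simp: in_set_conv_nth)
    then show "round_consistent T r" using rc p(3) by simp
  qed
  then have mem: "rs \<in> {rs. is_run A rs \<and> (\<exists>T\<in>teachers_H TT H. \<forall>r\<in>set rs. round_consistent T r)}"
    using p(4) T(1) by blast
  have "\<forall>r\<in>set rs. r_fb r \<noteq> None"
  proof
    fix r assume "r \<in> set rs"
    then obtain j where "j < length rs" "r = rs ! j" by (auto simp: in_set_conv_nth)
    then show "r_fb r \<noteq> None" using p(3) p(5) by (simp add: rnd_def)
  qed
  then have "num_mistakes rs = d" using p(3) by (simp add: num_mistakes_def)
  then show ?thesis unfolding mistake_bound_def using SUP_upper[OF mem, of "\<lambda>rs. enat (num_mistakes rs)"] by simp
qed

lemma lower:
  assumes A: "dff_alg H A"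
  shows "DFFdim Phi TT H \<le> mistake_bound A TT H"
  unfolding DFFdim_def by (rule SUP_least) (use lower_tree[OF A] in blast)


definition Vst :: "('x, 'y) teacher set \<Rightarrow> ('x \<times> 'y) set \<Rightarrow> ('x, 'y) round list \<Rightarrow> ('x, 'y) teacher set" where
  "Vst TT H ms = {T \<in> teachers_H TT H. \<forall>r\<in>set ms. round_consistent T r}"

definition chooser :: "('x \<Rightarrow> bool) set \<Rightarrow> ('x, 'y) teacher set \<Rightarrow> ('x \<times> 'y) set \<Rightarrow> ('x, 'y) round list \<Rightarrow> 'x \<Rightarrow> 'x \<times> 'y" where
  "chooser Phi TT H ms x =
     (if \<exists>e\<in>allowed_pairs H ms. good Phi (Vst TT H ms) (allowed_pairs H ms) x e
      then SOME e. e \<in> allowed_pairs H ms \<and> good Phi (Vst TT H ms) (allowed_pairs H ms) x e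
      else SOME e. e \<in> allowed_pairs H ms)"

definition mf :: "('x, 'y) round list \<Rightarrow> ('x, 'y) round list" where
  "mf rs = filter (\<lambda>r. r_fb r \<noteq> None) rs"

definition soa :: "('x \<Rightarrow> bool) set \<Rightarrow> ('x, 'y) teacher set \<Rightarrow> ('x \<times> 'y) set \<Rightarrow> ('x, 'y) dff_algorithm" where
  "soa Phi TT H rs x = chooser Phi TT H (mf rs) x"

lemma chooser_in:
  assumes "H \<noteq> {}" shows "chooser Phi TT H ms x \<in> allowed_pairs H ms"
proof -
  have "allowed_pairs H ms \<noteq> {}" using assms by (auto simp: allowed_pairs_def)
  then obtain e where e: "e \<in> allowed_pairs H ms" by blast
  show ?thesis
  proof (cases "\<exists>e\<in>allowed_pairs H ms. good Phi (Vst TT H ms) (allowed_pairs H ms) x e")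
    case True
    then have "\<exists>e. e \<in> allowed_pairs H ms \<and> good Phi (Vst TT H ms) (allowed_pairs H ms) x e" by blast
    from someI_ex[OF this] True show ?thesis unfolding chooser_def by simp
  next
    case False
    from someI[of "\<lambda>e. e \<in> allowed_pairs H ms", OF e] False show ?thesis unfolding chooser_def by simp
  qed
qed

lemma chooser_good:
  assumes "\<exists>e\<in>allowed_pairs H ms. good Phi (Vst TT H ms) (allowed_pairs H ms) x e"
  shows "good Phi (Vst TT H ms) (allowed_pairs H ms) x (chooser Phi TT H ms x)"
proof -
  have "\<exists>e. e \<in> allowed_pairs H ms \<and> good Phi (Vst TT H ms) (allowed_pairs H ms) x e" using assms by blast
  from someI_ex[OF this] assms show ?thesis unfolding chooser_def by simp
qed

lemma soa_alg: assumes "H \<noteq> {}" shows "dff_alg H (soa Phi TT H)"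
  unfolding dff_alg_def
proof (intro allI impI)
  fix rs x
  have "soa Phi TT H rs x \<in> allowed_pairs H (mf rs)" unfolding soa_def by (rule chooser_in[OF assms])
  moreover have "allowed_pairs H (mf rs) \<subseteq> allowed_pairs H rs"
    unfolding allowed_pairs_def mf_def by auto
  ultimately show "soa Phi TT H rs x \<in> allowed_pairs H rs" by blast
qed

lemma rc_label: "round_consistent T r \<Longrightarrow> fst T (r_ex r) = r_label r"
  by (auto simp: round_consistent_def r_label_def split: option.splits)

lemma is_run_snoc: "is_run A (rs @ [r]) \<Longrightarrow> is_run A rs \<and> A rs (r_ex r) = (r_expl r, r_pred r)"
proof -
  assume a: "is_run A (rs @ [r])"
  have "is_run A rs" unfolding is_run_def
  proof (intro allI impI)
    fix i assume i: "i < length rs"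
    then have "take i (rs @ [r]) = take i rs" "(rs @ [r]) ! i = rs ! i" by (auto simp: nth_append)
    then show "A (take i rs) (r_ex (rs ! i)) = (r_expl (rs ! i), r_pred (rs ! i))"
      using a i unfolding is_run_def by (metis length_append_singleton less_SucI)
  qed
  moreover have "A rs (r_ex r) = (r_expl r, r_pred r)"
    using a unfolding is_run_def by (metis length_append_singleton lessI nth_append_length
        append_eq_conv_conj)
  ultimately show ?thesis by blast
qed

lemma upper_run:
  assumes tc: "teacher_class Phi TT" and Hne: "H \<noteq> {}"
    and d: "DFFdim Phi TT H = enat d" and T0: "T0 \<in> teachers_H TT H"
  shows "is_run (soa Phi TT H) rs \<Longrightarrow> \<forall>r\<in>set rs. round_consistent T0 r \<Longrightarrow>
    \<exists>k. DFFdim Phi (Vst TT H (mf rs)) (allowed_pairs H (mf rs)) = enat k \<and> k + num_mistakes rs \<le> d"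
proof (induction rs rule: rev_induct)
  case Nil
  have "Vst TT H [] = teachers_H TT H" by (simp add: Vst_def)
  moreover have "allowed_pairs H [] = H" by (simp add: allowed_pairs_def)
  moreover have "teachers_H (teachers_H TT H) H = teachers_H TT H" by (auto simp: teachers_H_def)
  then have "DFFdim Phi (teachers_H TT H) H = DFFdim Phi TT H"
    unfolding DFFdim_def shattered_def by simp
  ultimately show ?case using d by (simp add: mf_def num_mistakes_def)
next
  case (snoc r rs)
  have run: "is_run (soa Phi TT H) rs" and step: "soa Phi TT H rs (r_ex r) = (r_expl r, r_pred r)"
    using is_run_snoc[OF snoc.prems(1)] by auto
  have cons0: "\<forall>r\<in>set rs. round_consistent T0 r" and rc: "round_consistent T0 r"
    using snoc.prems(2) by auto
  obtain k where k: "DFFdim Phi (Vst TT H (mf rs)) (allowed_pairs H (mf rs)) = enat k"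
    "k + num_mistakes rs \<le> d" using snoc.IH[OF run cons0] by blast
  show ?case
  proof (cases "r_fb r")
    case None
    then have "mf (rs @ [r]) = mf rs" "num_mistakes (rs @ [r]) = num_mistakes rs"
      by (simp_all add: mf_def num_mistakes_def)
    then show ?thesis using k by simp
  next
    case (Some yp)
    obtain y \<phi> where yp: "yp = (y, \<phi>)" by force
    define x where "x = r_ex r"
    define ms where "ms = mf rs"
    define V where "V = Vst TT H ms"
    define H' where "H' = allowed_pairs H ms"
    have mf2: "mf (rs @ [r]) = ms @ [r]" "num_mistakes (rs @ [r]) = Suc (num_mistakes rs)"
      using Some by (simp_all add: mf_def num_mistakes_def ms_def)
    have rc0: "y = fst T0 x" "r_pred r \<noteq> y" "snd T0 x (r_expl r) = Some \<phi>"
      using rc Some yp unfolding round_consistent_def x_def by auto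
    have msrs: "set ms \<subseteq> set rs" by (auto simp: ms_def mf_def)
    have T0V: "T0 \<in> V" using T0 cons0 msrs by (auto simp: V_def Vst_def)
    have tcV: "teacher_class Phi V" using tc by (auto simp: teacher_class_def V_def Vst_def teachers_H_def)
    have H'ne: "H' \<noteq> {}" using Hne by (auto simp: H'_def allowed_pairs_def)
    have consV: "\<forall>T\<in>V. consistent_hist H' T"
    proof
      fix T assume "T \<in> V"
      then have "T \<in> teachers_H TT H" "\<forall>r\<in>set ms. round_consistent T r" by (auto simp: V_def Vst_def)
      then have a: "consistent_hist H T" "\<forall>r\<in>set ms. fst T (r_ex r) = r_label r"
        using rc_label[of T] by (auto simp: teachers_H_def)
      show "consistent_hist H' T" unfolding consistent_hist_def H'_def allowed_pairs_def
      proof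
        fix z assume "z \<in> H \<union> {(r_ex r, r_label r) |r. r \<in> set ms}"
        then show "case z of (x, y) \<Rightarrow> fst T x = y"
        proof
          assume "z \<in> H" then show ?thesis using a(1) unfolding consistent_hist_def by auto
        next
          assume "z \<in> {(r_ex r, r_label r) |r. r \<in> set ms}"
          then show ?thesis using a(2) by auto
        qed
      qed
    qed
    have kV: "DFFdim Phi V H' = enat k" using k(1) by (simp add: V_def H'_def ms_def)
    have "\<exists>e\<in>H'. good Phi V H' x e" using key[OF tcV _ H'ne consV kV] T0V by blast
    then have g: "good Phi V H' x (r_expl r, r_pred r)"
      using chooser_good[of H ms Phi TT x] step
      unfolding V_def H'_def soa_def ms_def x_def by simp
    have lt: "DFFdim Phi (resp V x (r_expl r) T0) (H' \<union> {(x, fst T0 x)}) < enat k"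
      using g T0V rc0 kV unfolding good_def by auto
    have V2: "Vst TT H (ms @ [r]) = resp V x (r_expl r) T0"
    proof -
      have "round_consistent T r \<longleftrightarrow> fst T x = fst T0 x \<and> snd T x (r_expl r) = snd T0 x (r_expl r)" for T
        using rc0 Some yp unfolding round_consistent_def x_def by auto
      then show ?thesis unfolding Vst_def V_def resp_def by auto
    qed
    have H2: "allowed_pairs H (ms @ [r]) = H' \<union> {(x, fst T0 x)}"
    proof -
      have "r_label r = fst T0 x" using Some yp rc0 by (simp add: r_label_def)
      then show ?thesis unfolding allowed_pairs_def H'_def x_def by auto
    qed
    have lt2: "DFFdim Phi (Vst TT H (mf (rs @ [r]))) (allowed_pairs H (mf (rs @ [r]))) < enat k"
      using lt unfolding mf2(1) V2 H2 .
    obtain k' where k': "DFFdim Phi (Vst TT H (mf (rs @ [r]))) (allowed_pairs H (mf (rs @ [r]))) = enat k'"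
      using enat_iless[OF lt2] by blast
    then have "k' < k" using lt2 by simp
    then have "k' + num_mistakes (rs @ [r]) \<le> d" using k(2) mf2(2) by simp
    then show ?thesis using k' by blast
  qed
qed


theorem theorem1:
  fixes Phi :: "('x \<Rightarrow> bool) set"
    and TT :: "('x, 'y::finite) teacher set"
    and H :: "('x \<times> 'y) set"
  assumes "teacher_class Phi TT"
    and "H \<noteq> {}"
    and "teachers_H TT H \<noteq> {}"
  shows "(\<exists>A. dff_alg H A \<and> mistake_bound A TT H = DFFdim Phi TT H) \<and>
         (\<forall>A. dff_alg H A \<longrightarrow> DFFdim Phi TT H \<le> mistake_bound A TT H)"
proof -
  have low: "\<forall>A. dff_alg H A \<longrightarrow> DFFdim Phi TT H \<le> mistake_bound A TT H"
    using lower by blast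
  have "\<exists>A. dff_alg H A \<and> mistake_bound A TT H = DFFdim Phi TT H"
  proof (cases "DFFdim Phi TT H")
    case (enat d)
    have alg: "dff_alg H (soa Phi TT H)" using soa_alg[OF assms(2)] .
    have "mistake_bound (soa Phi TT H) TT H \<le> enat d"
      unfolding mistake_bound_def
    proof (rule SUP_least)
      fix rs assume "rs \<in> {rs. is_run (soa Phi TT H) rs \<and>
          (\<exists>T\<in>teachers_H TT H. \<forall>r\<in>set rs. round_consistent T r)}"
      then obtain T where r: "is_run (soa Phi TT H) rs" "T \<in> teachers_H TT H"
        "\<forall>r\<in>set rs. round_consistent T r" by blast
      obtain k where "k + num_mistakes rs \<le> d"
        using upper_run[OF assms(1,2) enat r(2) r(1) r(3)] by blast
      then show "enat (num_mistakes rs) \<le> enat d" by simp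
    qed
    then have "mistake_bound (soa Phi TT H) TT H = DFFdim Phi TT H"
      using low alg enat by (metis order_antisym)
    then show ?thesis using alg by blast
  next
    case infinity
    define A0 :: "('x, 'y) dff_algorithm" where "A0 = (\<lambda>rs x. SOME e. e \<in> H)"
    have "dff_alg H A0"
      unfolding dff_alg_def
    proof (intro allI impI)
      fix rs x
      have "A0 rs x \<in> H" unfolding A0_def using assms(2) by (simp add: some_in_eq)
      then show "A0 rs x \<in> allowed_pairs H rs" by (simp add: allowed_pairs_def)
    qed
    moreover have "mistake_bound A0 TT H = DFFdim Phi TT H"
    proof -
      have "\<infinity> \<le> mistake_bound A0 TT H" using low calculation infinity by metis
      then show ?thesis using infinity by simp
    qed
    ultimately show ?thesis by blast
  qed
  then show ?thesis using low by blast
qed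

end
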